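(* Let $\mathcal{H}$ be a $k$-uniform hypergraph with vertex degrees $d_i$. Then \[ \rho(\mathcal{Q}(\mathcal{H}))\leq\max_{e\in E(\mathcal{H})}\max_{\{i,j\}\subseteq e}(d_{i}+d_{j}). \]
   Context: A $k$-uniform hypergraph $\mathcal{H}$ on vertex set $[n]$ has edges that are $k$-element subsets of $[n]$; $d_i$ is the number of edges containing vertex $i$. The adjacency tensor $\mathcal{A}(\mathcal{H})$ has entries $\mathcal{A}_{i_1\cdots i_k}=\frac{1}{(k-1)!}$ if $\{i_1,\dots,i_k\}\in E(\mathcal{H})$ and $0$ otherwise; $\mathcal{D}(\mathcal{H})$ is the diagonal tensor with $\mathcal{D}_{i\cdots i}=d_i$; $\mathcal{Q}(\mathcal{H})=\mathcal{D}(\mathcal{H})+\mathcal{A}(\mathcal{H})$ is the signless Laplacian tensor. For a tensor $\mathcal{T}$ and $x\in\mathbb{C}^n$, $(\mathcal{T}x)_i=\sum_{i_2,\dots,i_k}\mathcal{T}_{ii_2\cdots i_k}x_{i_2}\cdots x_{i_k}$; $\lambda$ is an eigenvalue if $\mathcal{T}x=\lambda x^{[k-1]}$ for some nonzero $x$, where $x^{[k-1]}=(x_1^{k-1},\dots,x_n^{k-1})^T$; $\rho(\mathcal{T})$ is the maximum modulus of eigenvalues. *)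

theory Defs
  imports Complex_Main
begin

text \<open>Vertex set is {0..<n} (i.e. [n] relabelled). Edges are k-element subsets.\<close>

definition uniform_hypergraph :: "nat \<Rightarrow> nat \<Rightarrow> nat set set \<Rightarrow> bool" where
  "uniform_hypergraph n k E \<longleftrightarrow> (\<forall>e\<in>E. e \<subseteq> {..<n} \<and> card e = k)"

definition degree :: "nat set set \<Rightarrow> nat \<Rightarrow> nat" where
  "degree E i = card {e\<in>E. i \<in> e}"

text \<open>Order-k tensors of dimension n: functions on index lists (of length k, entries < n).\<close>

definition adj_tensor :: "nat \<Rightarrow> nat set set \<Rightarrow> nat list \<Rightarrow> real" where
  "adj_tensor k E is = (if set is \<in> E then 1 / fact (k - 1) else 0)"

definition deg_tensor :: "nat set set \<Rightarrow> nat list \<Rightarrow> real" where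
  "deg_tensor E is = (if is \<noteq> [] \<and> (\<forall>j\<in>set is. j = hd is) then real (degree E (hd is)) else 0)"

definition signless_laplacian_tensor :: "nat \<Rightarrow> nat set set \<Rightarrow> nat list \<Rightarrow> real" where
  "signless_laplacian_tensor k E is = deg_tensor E is + adj_tensor k E is"

definition tensor_apply :: "nat \<Rightarrow> nat \<Rightarrow> (nat list \<Rightarrow> real) \<Rightarrow> (nat \<Rightarrow> complex) \<Rightarrow> nat \<Rightarrow> complex" where
  "tensor_apply n k T x i =
     (\<Sum>is \<in> {is. length is = k - 1 \<and> set is \<subseteq> {..<n}}.
        complex_of_real (T (i # is)) * prod_list (map x is))"

definition tensor_eigenvalue :: "nat \<Rightarrow> nat \<Rightarrow> (nat list \<Rightarrow> real) \<Rightarrow> complex \<Rightarrow> bool" where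
  "tensor_eigenvalue n k T lam \<longleftrightarrow>
     (\<exists>x. (\<exists>i<n. x i \<noteq> 0) \<and> (\<forall>i<n. tensor_apply n k T x i = lam * x i ^ (k - 1)))"

definition tensor_spectral_radius :: "nat \<Rightarrow> nat \<Rightarrow> (nat list \<Rightarrow> real) \<Rightarrow> real" where
  "tensor_spectral_radius n k T = Sup {cmod lam | lam. tensor_eigenvalue n k T lam}"

end

theory Submission imports Defs "HOL-Combinatorics.Multiset_Permutations" "Jordan_Normal_Form.Spectral_Radius" begin
hide_const (open) Polynomial.degree

lemma norm_prod_list_le:
  assumes "\<forall>j\<in>set xs. cmod (x j) \<le> M" "M \<ge> 0"
  shows "cmod (prod_list (map x xs)) \<le> M ^ length xs"
  using assms
proof (induction xs)
  case Nil then show ?case by simp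
next
  case (Cons a xs)
  have "cmod (prod_list (map x (a#xs))) = cmod (x a) * cmod (prod_list (map x xs))"
    by (simp add: norm_mult)
  also have "\<dots> \<le> M * M ^ length xs"
    using Cons by (intro mult_mono) auto
  finally show ?case by simp
qed

lemma finite_S: "finite {ys::nat list. length ys = m \<and> set ys \<subseteq> {..<n}}"
  using finite_lists_length_eq[of "{..<n}" m] by (simp add: conj_commute)

lemma deg_part:
  assumes "i < n"
  shows "(\<Sum>ys \<in> {ys. length ys = k - 1 \<and> set ys \<subseteq> {..<n}}.
        complex_of_real (deg_tensor E (i # ys)) * prod_list (map x ys))
       = of_real (degree E i) * x i ^ (k - 1)"
proof -
  let ?S = "{ys. length ys = k - 1 \<and> set ys \<subseteq> {..<n}}"
  let ?r = "replicate (k - 1) i"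
  have "\<And>ys. ys \<in> ?S \<Longrightarrow> complex_of_real (deg_tensor E (i # ys)) * prod_list (map x ys)
      = (if ys = ?r then of_real (degree E i) * x i ^ (k - 1) else 0)"
  proof -
    fix ys assume "ys \<in> ?S"
    then have len: "length ys = k - 1" by simp
    have "(\<forall>j\<in>set ys. j = i) \<longleftrightarrow> ys = ?r"
      using len by (metis in_set_replicate replicate_length_same)
    then show "complex_of_real (deg_tensor E (i # ys)) * prod_list (map x ys)
      = (if ys = ?r then of_real (degree E i) * x i ^ (k - 1) else 0)"
      unfolding deg_tensor_def by (auto simp: prod_list_replicate)
  qed
  then have "(\<Sum>ys \<in> ?S. complex_of_real (deg_tensor E (i # ys)) * prod_list (map x ys))
      = (\<Sum>ys \<in> ?S. if ys = ?r then of_real (degree E i) * x i ^ (k - 1) else 0)"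
    by (rule sum.cong[OF refl])
  also have "\<dots> = of_real (degree E i) * x i ^ (k - 1)"
    using assms finite_S[of "k-1" n] by (simp add: sum.delta set_replicate_conv_if)
  finally show ?thesis .
qed

lemma split_Q:
  assumes "i < n"
  shows "tensor_apply n k (signless_laplacian_tensor k E) x i
     = of_real (degree E i) * x i ^ (k - 1) + tensor_apply n k (adj_tensor k E) x i"
  unfolding tensor_apply_def signless_laplacian_tensor_def
  using deg_part[OF assms, where k=k and E=E and x=x]
  by (simp add: distrib_right sum.distrib)

lemma card_L:
  assumes U: "uniform_hypergraph n k E" and k: "k \<ge> 2"
  shows "card {ys. (length ys = k - 1 \<and> set ys \<subseteq> {..<n}) \<and> set (i # ys) \<in> E}
         \<le> degree E i * fact (k - 1)"
proof -
  let ?L = "{ys. (length ys = k - 1 \<and> set ys \<subseteq> {..<n}) \<and> set (i # ys) \<in> E}"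
  let ?I = "{e\<in>E. i \<in> e}"
  have finE: "finite E"
  proof (rule finite_subset[of E "Pow {..<n}"])
    show "E \<subseteq> Pow {..<n}" using U unfolding uniform_hypergraph_def by auto
  qed simp
  have sub: "?L \<subseteq> (\<Union>e\<in>?I. permutations_of_set (e - {i}))"
  proof
    fix ys assume ys: "ys \<in> ?L"
    let ?e = "set (i # ys)"
    have eE: "?e \<in> E" using ys by simp
    have "card ?e = k" using U eE unfolding uniform_hypergraph_def by auto
    moreover have "length (i # ys) = k" using ys k by simp
    ultimately have "distinct (i # ys)" by (metis card_distinct)
    then have "ys \<in> permutations_of_set (?e - {i})"
      unfolding permutations_of_set_def by auto
    then show "ys \<in> (\<Union>e\<in>?I. permutations_of_set (e - {i}))" using eE by auto
  qed
  have "card ?L \<le> card (\<Union>e\<in>?I. permutations_of_set (e - {i}))"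
    by (rule card_mono[OF _ sub]) (use finE in \<open>auto intro!: finite_UN_I simp: finite_permutations_of_set\<close>)
  also have "\<dots> \<le> (\<Sum>e\<in>?I. card (permutations_of_set (e - {i})))"
    by (rule card_UN_le) (use finE in simp)
  also have "\<dots> = (\<Sum>e\<in>?I. fact (k - 1))"
  proof (rule sum.cong[OF refl])
    fix e assume e: "e \<in> ?I"
    then have "card e = k" using U unfolding uniform_hypergraph_def by auto
    moreover have "finite e" using e U k unfolding uniform_hypergraph_def
      by (metis (no_types, lifting) finite_lessThan finite_subset mem_Collect_eq)
    ultimately show "card (permutations_of_set (e - {i})) = fact (k - 1)"
      using e by simp
  qed
  also have "\<dots> = degree E i * fact (k - 1)" by (simp add: Defs.degree_def)
  finally show ?thesis .
qed

lemma adj_bound: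
  assumes U: "uniform_hypergraph n k E" and k: "k \<ge> 2" and M: "M \<ge> 0"
    and B: "\<And>e j. e \<in> E \<Longrightarrow> i \<in> e \<Longrightarrow> j \<in> e \<Longrightarrow> j \<noteq> i \<Longrightarrow> cmod (x j) \<le> M"
  shows "cmod (tensor_apply n k (adj_tensor k E) x i) \<le> real (degree E i) * M ^ (k - 1)"
proof -
  let ?S = "{ys. length ys = k - 1 \<and> set ys \<subseteq> {..<n}}"
  let ?L = "{ys. (length ys = k - 1 \<and> set ys \<subseteq> {..<n}) \<and> set (i # ys) \<in> E}"
  have finS: "finite ?S" by (rule finite_S)
  have "cmod (tensor_apply n k (adj_tensor k E) x i)
      \<le> (\<Sum>ys\<in>?S. cmod (complex_of_real (adj_tensor k E (i # ys)) * prod_list (map x ys)))"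
    unfolding tensor_apply_def by (rule norm_sum)
  also have "\<dots> \<le> (\<Sum>ys\<in>?S. if set (i # ys) \<in> E then M ^ (k - 1) / fact (k - 1) else 0)"
  proof (rule sum_mono)
    fix ys assume ys: "ys \<in> ?S"
    show "cmod (complex_of_real (adj_tensor k E (i # ys)) * prod_list (map x ys))
        \<le> (if set (i # ys) \<in> E then M ^ (k - 1) / fact (k - 1) else 0)"
    proof (cases "set (i # ys) \<in> E")
      case True
      let ?e = "set (i # ys)"
      have "card ?e = k" using U True unfolding uniform_hypergraph_def by auto
      moreover have "length (i # ys) = k" using ys k by simp
      ultimately have "distinct (i # ys)" by (metis card_distinct)
      then have "\<forall>j\<in>set ys. cmod (x j) \<le> M" using B[OF True] by auto
      then have "cmod (prod_list (map x ys)) \<le> M ^ (k - 1)"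
        using norm_prod_list_le[OF _ M] ys by fastforce
      moreover have "cmod (complex_of_real (adj_tensor k E (i # ys)) * prod_list (map x ys))
          = (1 / fact (k - 1)) * cmod (prod_list (map x ys))"
        using True unfolding adj_tensor_def by (simp only: if_True norm_mult norm_of_real) simp
      moreover have "(1 / fact (k - 1)) * cmod (prod_list (map x ys)) \<le> (1 / fact (k - 1)) * M ^ (k - 1)"
        by (rule mult_left_mono[OF calculation(1)]) simp
      ultimately show ?thesis using True by simp
    next
      case False
      then show ?thesis by (simp add: adj_tensor_def)
    qed
  qed
  also have "\<dots> = (\<Sum>ys\<in>?L. M ^ (k - 1) / fact (k - 1))"
  proof -
    have "?L = {ys\<in>?S. set (i # ys) \<in> E}" by auto
    then show ?thesis using sum.inter_filter[OF finS, of "\<lambda>_. M ^ (k - 1) / fact (k - 1)" "\<lambda>ys. set (i # ys) \<in> E"]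
      by simp
  qed
  also have "\<dots> = real (card ?L) * (M ^ (k - 1) / fact (k - 1))" by simp
  also have "\<dots> \<le> real (degree E i * fact (k - 1)) * (M ^ (k - 1) / fact (k - 1))"
  proof (rule mult_right_mono)
    show "real (card ?L) \<le> real (degree E i * fact (k - 1))"
      using card_L[OF U k, of i] by (simp only: of_nat_le_iff)
    show "0 \<le> M ^ (k - 1) / fact (k - 1)" using M by simp
  qed
  also have "\<dots> = real (degree E i) * M ^ (k - 1)" by simp
  finally show ?thesis .
qed

lemma arith_key:
  fixes L A B P Q X Y :: real
  assumes h1: "A * X \<le> P * Y" and h2: "B * Y \<le> Q * X" and X: "X > 0" and Y: "Y \<ge> 0"
    and P: "P \<ge> 0" and Q: "Q \<ge> 0" and A: "A \<ge> 0" and B: "B \<ge> 0"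
    and l1: "L \<le> A + P" and l2: "L \<le> B + Q"
  shows "L \<le> P + Q"
proof (cases "Y = 0")
  case True
  then have "A * X \<le> 0" using h1 by simp
  then have "A \<le> 0" using X by (simp add: mult_le_0_iff)
  then show ?thesis using l1 Q by linarith
next
  case False
  with Y have Y: "Y > 0" by simp
  show ?thesis
  proof (rule ccontr)
    assume "\<not> L \<le> P + Q"
    then have a: "A > Q" and b: "B > P" using l1 l2 by linarith+
    have "A * B * X = B * (A * X)" by (simp add: algebra_simps)
    also have "\<dots> \<le> B * (P * Y)" using h1 B by (rule mult_left_mono)
    also have "\<dots> = P * (B * Y)" by (simp add: algebra_simps)
    also have "\<dots> \<le> P * (Q * X)" using h2 P by (rule mult_left_mono)
    finally have "(A * B) * X \<le> (P * Q) * X" by (simp add: algebra_simps)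
    then have c: "A * B \<le> P * Q" using X by simp
    have "Q * B < A * B" using a b P by (intro mult_strict_right_mono) auto
    moreover have "Q * P \<le> Q * B" using b Q by (intro mult_left_mono) auto
    ultimately show False using c by (simp add: algebra_simps)
  qed
qed

lemma two_elems:
  assumes "card e \<ge> 2" "p \<in> e"
  shows "\<exists>q\<in>e. q \<noteq> p"
proof (rule ccontr)
  assume "\<not> ?thesis"
  then have "e \<subseteq> {p}" by auto
  then have "card e \<le> 1" by (metis card.empty card.insert card_mono finite.emptyI finite_insert empty_iff One_nat_def)
  then show False using assms(1) by simp
qed

lemma edge_lt:
  assumes "uniform_hypergraph n k E" "e \<in> E" "j \<in> e" shows "j < n"
  using assms unfolding uniform_hypergraph_def by auto

lemma edge_card:
  assumes "uniform_hypergraph n k E" "e \<in> E" shows "card e = k"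
  using assms unfolding uniform_hypergraph_def by auto

lemma norm_tri_real:
  fixes lam :: complex and d :: real
  assumes "d \<ge> 0"
  shows "cmod lam \<le> cmod (lam - of_real d) + d"
proof -
  have "cmod lam \<le> cmod (of_real d) + cmod (lam - of_real d)" by (rule norm_triangle_sub)
  then show ?thesis using assms by simp
qed

lemma eig_bound:
  assumes U: "uniform_hypergraph n k E" and k: "k \<ge> 2" and En: "E \<noteq> {}"
    and ev: "tensor_eigenvalue n k (signless_laplacian_tensor k E) lam"
  shows "\<exists>e i j. e \<in> E \<and> i \<in> e \<and> j \<in> e \<and> i \<noteq> j \<and> cmod lam \<le> real (degree E i + degree E j)"
proof -
  obtain x where nz: "\<exists>i<n. x i \<noteq> 0"
    and eq: "\<And>i. i < n \<Longrightarrow> tensor_apply n k (signless_laplacian_tensor k E) x i = lam * x i ^ (k - 1)"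
    using ev unfolding tensor_eigenvalue_def by blast
  define a where "a i = cmod (x i)" for i
  define m where "m = k - 1"
  define d where "d i = real (degree E i)" for i
  have key: "cmod (lam - of_real (d i)) * a i ^ m = cmod (tensor_apply n k (adj_tensor k E) x i)"
    if "i < n" for i
  proof -
    have "of_real (d i) * x i ^ (k - 1) + tensor_apply n k (adj_tensor k E) x i = lam * x i ^ (k - 1)"
      using eq[OF that] split_Q[OF that, of k E x] unfolding d_def by simp
    then have "tensor_apply n k (adj_tensor k E) x i = (lam - of_real (d i)) * x i ^ (k - 1)"
      by (simp add: algebra_simps)
    then show ?thesis unfolding a_def m_def by (simp add: norm_mult norm_power)
  qed
  have dge: "d i \<ge> 0" for i unfolding d_def by simp
  from nz obtain i0 where i0: "i0 < n" "x i0 \<noteq> 0" by blast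
  have finP: "finite (a ` {..<n})" and neP: "a ` {..<n} \<noteq> {}" using i0 by auto
  obtain p where p: "p < n" "a p = Max (a ` {..<n})"
    using Max_in[OF finP neP] by auto
  have pmax: "a j \<le> a p" if "j < n" for j
    using p Max_ge[OF finP] that by auto
  have ap: "a p > 0" using pmax[OF i0(1)] i0(2) unfolding a_def by (metis norm_le_zero_iff not_less order_trans)
  then have apm: "a p ^ m > 0" by simp
  obtain e0 where e0: "e0 \<in> E" using En by blast
  show ?thesis
  proof (cases "\<exists>e\<in>E. p \<in> e")
    case False
    have "cmod (tensor_apply n k (adj_tensor k E) x p) \<le> real (degree E p) * 0 ^ (k - 1)"
      by (rule adj_bound[OF U k]) (use False in auto)
    moreover have "real (degree E p) * (0::real) ^ (k - 1) = 0" using k by simp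
    ultimately have "cmod (tensor_apply n k (adj_tensor k E) x p) \<le> 0" by linarith
    then have "cmod (lam - of_real (d p)) * a p ^ m \<le> 0" using key[OF p(1)] by linarith
    then have "cmod (lam - of_real (d p)) \<le> 0" using apm by (simp add: mult_le_0_iff)
    moreover have "d p = 0"
    proof -
      have em: "{e \<in> E. p \<in> e} = {}" using False by auto
      show ?thesis unfolding d_def Defs.degree_def em by simp
    qed
    ultimately have l0: "cmod lam = 0" by simp
    obtain u where u: "u \<in> e0" using edge_card[OF U e0] k by (metis card.empty ex_in_conv not_numeral_le_zero)
    obtain v where v: "v \<in> e0" "v \<noteq> u" using two_elems[of e0 u] edge_card[OF U e0] k u by auto
    show ?thesis using e0 u v l0 by (intro exI[of _ e0] exI[of _ u] exI[of _ v]) auto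
  next
    case True
    then obtain e1 where e1: "e1 \<in> E" "p \<in> e1" by blast
    obtain q0 where q0: "q0 \<in> e1" "q0 \<noteq> p" using two_elems[of e1 p] edge_card[OF U e1(1)] k e1 by auto
    define N where "N = {j. \<exists>e\<in>E. p \<in> e \<and> j \<in> e \<and> j \<noteq> p}"
    have NS: "N \<subseteq> {..<n}" unfolding N_def using edge_lt[OF U] by auto
    have finN: "finite (a ` N)" using finite_subset[OF NS] by auto
    have neN: "a ` N \<noteq> {}" using q0 e1 unfolding N_def by auto
    obtain q where q: "q \<in> N" "a q = Max (a ` N)" using Max_in[OF finN neN] by auto
    have qmax: "a j \<le> a q" if "j \<in> N" for j using q Max_ge[OF finN] that by auto
    obtain e2 where e2: "e2 \<in> E" "p \<in> e2" "q \<in> e2" "q \<noteq> p" using q(1) unfolding N_def by auto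
    have qn: "q < n" using NS q(1) by auto
    have "cmod (tensor_apply n k (adj_tensor k E) x p) \<le> real (degree E p) * a q ^ (k - 1)"
      by (rule adj_bound[OF U k]) (simp add: a_def, fastforce simp: a_def[symmetric] N_def intro!: qmax)
    then have h1: "cmod (lam - of_real (d p)) * a p ^ m \<le> d p * a q ^ m"
      using key[OF p(1)] unfolding d_def m_def by simp
    have "cmod (tensor_apply n k (adj_tensor k E) x q) \<le> real (degree E q) * a p ^ (k - 1)"
      by (rule adj_bound[OF U k]) (simp add: a_def, fastforce simp: a_def[symmetric] intro!: pmax edge_lt[OF U])
    then have h2: "cmod (lam - of_real (d q)) * a q ^ m \<le> d q * a p ^ m"
      using key[OF qn] unfolding d_def m_def by simp
    have "cmod lam \<le> d p + d q"
      by (rule arith_key[OF h1 h2 apm _ dge dge _ _ norm_tri_real[OF dge] norm_tri_real[OF dge]])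
        (auto simp: a_def)
    then show ?thesis using e2 unfolding d_def
      by (intro exI[of _ e2] exI[of _ p] exI[of _ q]) auto
  qed
qed

lemma lists1: "{ys::nat list. length ys = 2 - 1 \<and> set ys \<subseteq> {..<n}} = (\<lambda>j. [j]) ` {..<n}"
proof
  show "{ys::nat list. length ys = 2 - 1 \<and> set ys \<subseteq> {..<n}} \<subseteq> (\<lambda>j. [j]) ` {..<n}"
  proof
    fix ys :: "nat list" assume "ys \<in> {ys. length ys = 2 - 1 \<and> set ys \<subseteq> {..<n}}"
    then obtain j where "ys = [j]" "j < n" by (auto simp: length_Suc_conv)
    then show "ys \<in> (\<lambda>j. [j]) ` {..<n}" by auto
  qed
qed auto

lemma exists_eig_2:
  assumes n: "n > 0"
  shows "\<exists>lam. tensor_eigenvalue n 2 T lam"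
proof -
  define M where "M = mat n n (\<lambda>(i,j). complex_of_real (T [i,j]))"
  have Mc: "M \<in> carrier_mat n n" unfolding M_def by simp
  obtain lam where "lam \<in> spectrum M" using spectrum_non_empty[OF Mc n] by blast
  then have "eigenvalue M lam" unfolding spectrum_def by simp
  then obtain v where v: "v \<in> carrier_vec n" "v \<noteq> 0\<^sub>v n" "M *\<^sub>v v = lam \<cdot>\<^sub>v v"
    unfolding eigenvalue_def eigenvector_def using Mc by auto
  define x where "x i = (if i < n then v $ i else 0)" for i
  have nz: "\<exists>i<n. x i \<noteq> 0"
  proof (rule ccontr)
    assume "\<not> ?thesis"
    then have "v = 0\<^sub>v n" using v(1) unfolding x_def by (intro eq_vecI) auto
    then show False using v(2) by simp
  qed
  have "tensor_apply n 2 T x i = lam * x i ^ (2 - 1)" if i: "i < n" for i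
  proof -
    have "tensor_apply n 2 T x i = (\<Sum>j<n. complex_of_real (T [i, j]) * x j)"
      unfolding tensor_apply_def lists1 by (subst sum.reindex) (auto simp: inj_on_def)
    also have "\<dots> = (\<Sum>j\<in>{0..<n}. M $$ (i, j) * v $ j)"
      unfolding M_def x_def using i by (intro sum.cong) auto
    also have "\<dots> = (M *\<^sub>v v) $ i"
      using i v(1) Mc by (simp add: scalar_prod_def)
    also have "\<dots> = lam * x i ^ (2 - 1)" using v i unfolding x_def by simp
    finally show ?thesis .
  qed
  then show ?thesis unfolding tensor_eigenvalue_def using nz by blast
qed

lemma exists_eig_3:
  assumes U: "uniform_hypergraph n k E" and k: "k \<ge> 3" and n: "n > 0"
  shows "\<exists>lam. tensor_eigenvalue n k (signless_laplacian_tensor k E) lam"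
proof -
  define x where "x i = (if i = 0 then (1::complex) else 0)" for i :: nat
  have nz: "\<exists>i<n. x i \<noteq> 0" using n unfolding x_def by auto
  have A0: "tensor_apply n k (adj_tensor k E) x i = 0" for i
    unfolding tensor_apply_def
  proof (rule sum.neutral, rule ballI)
    fix ys assume "ys \<in> {ys. length ys = k - 1 \<and> set ys \<subseteq> {..<n}}"
    show "complex_of_real (adj_tensor k E (i # ys)) * prod_list (map x ys) = 0"
    proof (cases "prod_list (map x ys) = 0")
      case False
      then have "\<forall>j\<in>set ys. x j \<noteq> 0" by (auto simp: prod_list_zero_iff)
      then have "set ys \<subseteq> {0}" unfolding x_def by (auto split: if_splits)
      then have "set (i # ys) \<subseteq> {i, 0}" by auto
      then have "card (set (i # ys)) \<le> card {i, 0::nat}" by (intro card_mono) auto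
      also have "\<dots> \<le> 2" by (simp add: card_insert_if)
      finally have "set (i # ys) \<notin> E" using U k unfolding uniform_hypergraph_def by auto
      then show ?thesis by (simp add: adj_tensor_def)
    qed simp
  qed
  have "tensor_apply n k (signless_laplacian_tensor k E) x i
      = of_real (real (degree E 0)) * x i ^ (k - 1)" if "i < n" for i
    using split_Q[OF that, of k E x] A0[of i] k unfolding x_def by auto
  then show ?thesis unfolding tensor_eigenvalue_def using nz by blast
qed

theorem corollary2p2:
  fixes n k :: nat and E :: "nat set set"
  assumes "uniform_hypergraph n k E" and "k \<ge> 2" and "E \<noteq> {}"
  shows "tensor_spectral_radius n k (signless_laplacian_tensor k E)
           \<le> Max {real (degree E i + degree E j) | e i j. e \<in> E \<and> i \<in> e \<and> j \<in> e \<and> i \<noteq> j}"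
proof -
  let ?D = "{real (degree E i + degree E j) | e i j. e \<in> E \<and> i \<in> e \<and> j \<in> e \<and> i \<noteq> j}"
  let ?T = "signless_laplacian_tensor k E"
  have finD: "finite ?D"
  proof (rule finite_subset)
    show "?D \<subseteq> (\<lambda>(i, j). real (degree E i + degree E j)) ` ({..<n} \<times> {..<n})"
      using edge_lt[OF assms(1)] by fastforce
  qed simp
  obtain e0 where e0: "e0 \<in> E" using assms(3) by blast
  have n: "n > 0"
  proof -
    obtain u where "u \<in> e0" using edge_card[OF assms(1) e0] assms(2)
      by (metis card.empty ex_in_conv not_numeral_le_zero)
    then show ?thesis using edge_lt[OF assms(1) e0] by fastforce
  qed
  have ex: "\<exists>lam. tensor_eigenvalue n k ?T lam"
  proof (cases "k = 2")
    case True then show ?thesis using exists_eig_2[OF n] by simp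
  next
    case False then show ?thesis using exists_eig_3[OF assms(1) _ n] assms(2) by simp
  qed
  have bnd: "cmod lam \<le> Max ?D" if ev: "tensor_eigenvalue n k ?T lam" for lam
  proof -
    obtain e i j where "e \<in> E" "i \<in> e" "j \<in> e" "i \<noteq> j"
      and le: "cmod lam \<le> real (degree E i + degree E j)"
      using eig_bound[OF assms ev] by blast
    then have "real (degree E i + degree E j) \<in> ?D" by blast
    then have "real (degree E i + degree E j) \<le> Max ?D" using finD by (rule Max_ge[rotated])
    then show ?thesis using le by linarith
  qed
  show ?thesis unfolding tensor_spectral_radius_def
    by (rule cSup_least) (use ex bnd in auto)
qed

end
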